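(* Let $R$ and $Q$ be rod sets. (a) There exist a rod set $R'\equiv R$ and an expansion subtree $\mathsf T$ of $\mathrm{Tree}(R')$ with $\langle\mathrm{Inner}(\mathsf T)\rangle\equiv Q$. (b) For any rod set $R'\equiv R$ and any expansion subtree $\mathsf T$ of $\mathrm{Tree}(R')$ with $\langle\mathrm{Inner}(\mathsf T)\rangle\equiv Q$, one has $$\langle\mathrm{Leaves}(\mathsf T)\rangle\equiv R\cup\overline{Q}\cup QR .$$
   Context: A rod is a triple $(r,c,\varepsilon)$ with $r$ a positive integer (length), $c$ a tag (color) and $\varepsilon\in\{\pm1\}$ (sign); rods of sign $-1$ are antirods. A rod set is a set of rods with finitely many rods of each length. $C(n,R)$ is the number of positive rods of length $n$ in $R$ minus the number of antirods of length $n$. Rod sets $R,S$ are equivalent, $R\equiv S$, if $C(n,R)=C(n,S)$ for all $n>0$ (equivalently, one is obtained from the other by adding/deleting pairs consisting of a rod and an antirod of the same length). Unions of rod sets are disjoint (multiset) unions; $\overline{Q}$ is $Q$ with all signs reversed; the concatenation $QR$ is the rod set with one rod for each pair $(q,r)\in Q\times R$, of length $\operatorname{len}(q)+\operatorname{len}(r)$ and sign $\operatorname{sign}(q)\operatorname{sign}(r)$. A train built from $R$ is a finite sequence of rods of $R$ (the empty train is $\Lambda$), with length the sum of lengths and sign the product of signs; for a set $X$ of trains, $\langle X\rangle$ is the rod set with one rod, of the same length and sign, for each nonempty train in $X$. $\mathrm{Tree}(R)$ is the rooted tree with nodes the trains built from $R$, root $\Lambda$, and children of $\tau$ the trains $\tau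 k$, $k\in R$ (one per rod). An expansion subtree $\mathsf T$ is a rooted subtree containing all children of the root, and containing all children of any node of which it contains at least one child; $\mathrm{Inner}(\mathsf T)$ is the set of non-root nodes with children in $\mathsf T$, $\mathrm{Leaves}(\mathsf T)$ the set of nodes of $\mathsf T$ without children in $\mathsf T$. *)

theory Defs
  imports Main
begin

type_synonym 'c rod = "nat \<times> 'c \<times> int"

definition rlen :: "'c rod \<Rightarrow> nat" where "rlen k = fst k"
definition rcol :: "'c rod \<Rightarrow> 'c" where "rcol k = fst (snd k)"
definition rsign :: "'c rod \<Rightarrow> int" where "rsign k = snd (snd k)"

definition rodset :: "'c rod set \<Rightarrow> bool" where
  "rodset R \<longleftrightarrow> (\<forall>k\<in>R. rlen k > 0 \<and> (rsign k = 1 \<or> rsign k = -1))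
      \<and> (\<forall>n. finite {k\<in>R. rlen k = n})"

definition Ccount :: "nat \<Rightarrow> 'c rod set \<Rightarrow> int" where
  "Ccount n R = int (card {k\<in>R. rlen k = n \<and> rsign k = 1})
              - int (card {k\<in>R. rlen k = n \<and> rsign k = -1})"

definition rod_equiv :: "'c rod set \<Rightarrow> 'd rod set \<Rightarrow> bool" (infix "\<equiv>\<^sub>r" 50) where
  "R \<equiv>\<^sub>r S \<longleftrightarrow> (\<forall>n>0. Ccount n R = Ccount n S)"

text \<open>Disjoint union: colours are tagged to keep the union disjoint.\<close>
definition runion :: "'c rod set \<Rightarrow> 'd rod set \<Rightarrow> ('c + 'd) rod set" where
  "runion A B = {(l, Inl c, s) | l c s. (l, c, s) \<in> A} \<union> {(l, Inr c, s) | l c s. (l, c, s) \<in> B}"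

definition rbar :: "'c rod set \<Rightarrow> 'c rod set" where
  "rbar Q = {(l, c, - s) | l c s. (l, c, s) \<in> Q}"

definition rconcat :: "'c rod set \<Rightarrow> 'd rod set \<Rightarrow> ('c rod \<times> 'd rod) rod set" where
  "rconcat Q R = {(rlen q + rlen r, (q, r), rsign q * rsign r) | q r. q \<in> Q \<and> r \<in> R}"

text \<open>Trains built from R are lists of rods of R.\<close>
definition train_len :: "'c rod list \<Rightarrow> nat" where
  "train_len t = (\<Sum>k\<leftarrow>t. rlen k)"
definition train_sign :: "'c rod list \<Rightarrow> int" where
  "train_sign t = (\<Prod>k\<leftarrow>t. rsign k)"

definition trains_rods :: "'c rod list set \<Rightarrow> ('c rod list) rod set" where
  "trains_rods X = {(train_len t, t, train_sign t) | t. t \<in> X \<and> t \<noteq> []}"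

text \<open>Tree(R): nodes are the trains in lists R, root [], children of t are t @ [k], k in R.\<close>
definition expansion_subtree :: "'c rod set \<Rightarrow> 'c rod list set \<Rightarrow> bool" where
  "expansion_subtree R T \<longleftrightarrow>
     T \<subseteq> lists R \<and> [] \<in> T
     \<and> (\<forall>t k. t @ [k] \<in> T \<longrightarrow> t \<in> T)
     \<and> (\<forall>k\<in>R. [k] \<in> T)
     \<and> (\<forall>t k k'. t @ [k] \<in> T \<and> k' \<in> R \<longrightarrow> t @ [k'] \<in> T)"

definition Inner :: "'c rod set \<Rightarrow> 'c rod list set \<Rightarrow> 'c rod list set" where
  "Inner R T = {t\<in>T. t \<noteq> [] \<and> (\<exists>k\<in>R. t @ [k] \<in> T)}"

definition Leaves :: "'c rod set \<Rightarrow> 'c rod list set \<Rightarrow> 'c rod list set" where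
  "Leaves R T = {t\<in>T. \<not> (\<exists>k\<in>R. t @ [k] \<in> T)}"

end

theory Submission
  imports Defs
begin


lemma rod_simps[simp]: "rlen (a,b,c) = a" "rcol (a,b,c) = b" "rsign (a,b,c) = c"
  by (simp_all add: rlen_def rcol_def rsign_def)

definition W :: "nat \<Rightarrow> 'c rod set \<Rightarrow> int" where
 "W n A = (\<Sum>k\<in>{k\<in>A. rlen k = n}. rsign k)"

lemma Ccount_W: assumes "rodset A" shows "Ccount n A = W n A"
proof -
  let ?F = "{k\<in>A. rlen k = n}"
  have fin: "finite ?F" using assms by (auto simp: rodset_def)
  have eq: "?F = {k\<in>A. rlen k = n \<and> rsign k = 1} \<union> {k\<in>A. rlen k = n \<and> rsign k = -1}"
    using assms by (auto simp: rodset_def)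
  have f1: "finite {k\<in>A. rlen k = n \<and> rsign k = 1}" by (rule finite_subset[OF _ fin]) auto
  have f2: "finite {k\<in>A. rlen k = n \<and> rsign k = -1}" by (rule finite_subset[OF _ fin]) auto
  have "W n A = (\<Sum>k\<in>{k\<in>A. rlen k = n \<and> rsign k = 1}. rsign k) + (\<Sum>k\<in>{k\<in>A. rlen k = n \<and> rsign k = -1}. rsign k)"
    unfolding W_def by (subst eq, rule sum.union_disjoint[OF f1 f2]) auto
  also have "\<dots> = (\<Sum>k\<in>{k\<in>A. rlen k = n \<and> rsign k = 1}. 1) + (\<Sum>k\<in>{k\<in>A. rlen k = n \<and> rsign k = -1}. -1)"
    by (intro arg_cong2[where f="(+)"] sum.cong) auto
  also have "\<dots> = Ccount n A" by (simp add: Ccount_def)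
  finally show ?thesis by simp
qed

lemma W_zero: "rodset A \<Longrightarrow> W 0 A = 0"
  unfolding W_def rodset_def by (auto intro!: sum.neutral)

lemma W_equiv: assumes "rodset A" "rodset B" "A \<equiv>\<^sub>r B" shows "W m A = W m B"
proof (cases "m = 0")
  case True thus ?thesis using assms W_zero by metis
next
  case False thus ?thesis using assms by (simp add: rod_equiv_def Ccount_W[symmetric])
qed

lemma fiber_image: "{k\<in>f`A. rlen k = n} = f ` {k\<in>A. rlen (f k) = n}" by auto

lemma W_image: assumes "inj_on f A" shows "W n (f`A) = (\<Sum>k\<in>{k\<in>A. rlen (f k) = n}. rsign (f k))"
  unfolding W_def fiber_image
  by (subst sum.reindex) (auto intro: inj_on_subset[OF assms])

lemma rodset_image:
  assumes "\<And>n. finite {k\<in>A. rlen (f k) = n}"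
    "\<And>k. k\<in>A \<Longrightarrow> rlen (f k) > 0 \<and> (rsign (f k) = 1 \<or> rsign (f k) = -1)"
  shows "rodset (f`A)" using assms unfolding rodset_def fiber_image by auto

lemma rodset_Un: "rodset A \<Longrightarrow> rodset B \<Longrightarrow> rodset (A \<union> B)"
  unfolding rodset_def by (auto simp: Collect_disj_eq conj_disj_distribR)

lemma W_Un: assumes "rodset A" "rodset B" "A \<inter> B = {}" shows "W n (A \<union> B) = W n A + W n B"
proof -
  have "{k\<in>A\<union>B. rlen k = n} = {k\<in>A. rlen k = n} \<union> {k\<in>B. rlen k = n}" by auto
  thus ?thesis unfolding W_def using assms
    by (simp add: rodset_def sum.union_disjoint disjoint_iff)
qed

lemma runion_eq: "runion A B = (\<lambda>k. (rlen k, Inl (rcol k), rsign k)) ` A \<union> (\<lambda>k. (rlen k, Inr (rcol k), rsign k)) ` B"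
  unfolding runion_def by (auto simp: image_iff) (metis rod_simps)+

lemma runion_props: fixes A :: "'a rod set" and B :: "'b rod set" assumes "rodset A" "rodset B"
  shows "rodset (runion A B)" "W n (runion A B) = W n A + W n B"
proof -
  let ?f = "(\<lambda>k. (rlen k, Inl (rcol k) :: 'a + 'b, rsign k))" and ?g = "(\<lambda>k. (rlen k, Inr (rcol k) :: 'a + 'b, rsign k))"
  have i1: "inj_on ?f A" by (rule inj_onI) (metis prod.collapse rlen_def rcol_def rsign_def prod.inject sum.inject(1))
  have i2: "inj_on ?g B" by (rule inj_onI) (metis prod.collapse rlen_def rcol_def rsign_def prod.inject sum.inject(2))
  have r1: "rodset (?f ` A)" using assms(1) by (intro rodset_image) (auto simp: rodset_def)
  have r2: "rodset (?g ` B)" using assms(2) by (intro rodset_image) (auto simp: rodset_def)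
  show "rodset (runion A B)" unfolding runion_eq using r1 r2 by (rule rodset_Un)
  have "W n (runion A B) = W n (?f ` A) + W n (?g ` B)"
    unfolding runion_eq by (rule W_Un[OF r1 r2]) force
  also have "\<dots> = W n A + W n B" using W_image[OF i1] W_image[OF i2] by (simp add: W_def)
  finally show "W n (runion A B) = W n A + W n B" .
qed

lemma rbar_eq: "rbar A = (\<lambda>k. (rlen k, rcol k, - rsign k)) ` A"
  unfolding rbar_def by (auto simp: image_iff) (metis rod_simps)+

lemma rbar_props: assumes "rodset A"
  shows "rodset (rbar A)" "W n (rbar A) = - W n A"
proof -
  let ?f = "(\<lambda>k. (rlen k, rcol k, - rsign k))"
  have i1: "inj_on ?f A" by (rule inj_onI) (metis prod.collapse rlen_def rcol_def rsign_def prod.inject neg_equal_iff_equal)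
  show "rodset (rbar A)" unfolding rbar_eq using assms by (intro rodset_image) (auto simp: rodset_def)
  show "W n (rbar A) = - W n A" unfolding rbar_eq W_image[OF i1] by (simp add: W_def sum_negf)
qed

lemma conv_set: "{p\<in>A\<times>B. la (fst p) + lb (snd p) = (n::nat)} = (\<Union>a\<in>{..n}. {x\<in>A. la x = a} \<times> {y\<in>B. lb y = n - a})"
  by auto

lemma conv:
  assumes "\<And>a. finite {x\<in>A. la x = a}" "\<And>b. finite {y\<in>B. lb y = b}"
  shows "(\<Sum>p\<in>{p\<in>A\<times>B. la (fst p) + lb (snd p) = (n::nat)}. f (fst p) * g (snd p) :: int)
      = (\<Sum>a\<in>{..n}. (\<Sum>x\<in>{x\<in>A. la x = a}. f x) * (\<Sum>y\<in>{y\<in>B. lb y = n - a}. g y))"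
proof -
  have "(\<Sum>p\<in>{p\<in>A\<times>B. la (fst p) + lb (snd p) = n}. f (fst p) * g (snd p))
     = (\<Sum>a\<in>{..n}. \<Sum>p\<in>{x\<in>A. la x = a} \<times> {y\<in>B. lb y = n - a}. f (fst p) * g (snd p))"
    unfolding conv_set using assms by (subst sum.UNION_disjoint) auto
  also have "\<dots> = (\<Sum>a\<in>{..n}. (\<Sum>x\<in>{x\<in>A. la x = a}. f x) * (\<Sum>y\<in>{y\<in>B. lb y = n - a}. g y))"
    by (simp add: sum_product sum.cartesian_product split_def)
  finally show ?thesis .
qed

lemma finite_conv: assumes "\<And>a. finite {x\<in>A. la x = a}" "\<And>b. finite {y\<in>B. lb y = b}"
  shows "finite {p\<in>A\<times>B. la (fst p) + lb (snd p) = (n::nat)}"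
  unfolding conv_set using assms by auto

lemma rconcat_eq: "rconcat Q R = (\<lambda>p. (rlen (fst p) + rlen (snd p), p, rsign (fst p) * rsign (snd p))) ` (Q \<times> R)"
  unfolding rconcat_def by (auto simp: image_iff)

lemma rconcat_props: assumes "rodset Q" "rodset R"
  shows "rodset (rconcat Q R)" "W n (rconcat Q R) = (\<Sum>a\<in>{..n}. W a Q * W (n - a) R)"
proof -
  let ?f = "(\<lambda>p. (rlen (fst p) + rlen (snd p), p, rsign (fst p) * rsign (snd p)))"
  have i1: "inj_on ?f (Q \<times> R)" by (rule inj_onI) auto
  have fQ: "\<And>a. finite {x\<in>Q. rlen x = a}" and fR: "\<And>a. finite {x\<in>R. rlen x = a}"
    using assms by (auto simp: rodset_def)
  have sm: "\<And>a b::int. (a = 1 \<or> a = -1) \<Longrightarrow> (b = 1 \<or> b = -1) \<Longrightarrow> a*b = 1 \<or> a*b = -1" by auto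
  show "rodset (rconcat Q R)" unfolding rconcat_eq
  proof (rule rodset_image)
    fix k assume "k \<in> Q \<times> R"
    then obtain q r where k: "k = (q,r)" "q \<in> Q" "r \<in> R" by auto
    have "rlen q > 0" "rsign q = 1 \<or> rsign q = -1" "rsign r = 1 \<or> rsign r = -1"
      using assms k unfolding rodset_def by auto
    thus "0 < rlen (?f k) \<and> (rsign (?f k) = 1 \<or> rsign (?f k) = -1)"
      using sm k(1) by simp
  next
    fix n show "finite {k\<in>Q\<times>R. rlen (?f k) = n}" using finite_conv[OF fQ fR, of n] by simp
  qed
  show "W n (rconcat Q R) = (\<Sum>a\<in>{..n}. W a Q * W (n - a) R)"
    unfolding rconcat_eq W_image[OF i1] using conv[OF fQ fR, where n=n and f=rsign and g=rsign]
    by (simp add: W_def)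
qed



lemma train_simps[simp]:
  "train_len [] = 0" "train_len (t @ [k]) = train_len t + rlen k" "train_len [k] = rlen k"
  "train_sign [] = 1" "train_sign (t @ [k]) = train_sign t * rsign k" "train_sign [k] = rsign k"
  by (simp_all add: train_len_def train_sign_def)

lemma train_aux:
  assumes "\<forall>k\<in>set t. rlen k > 0"
  shows "length t \<le> train_len t \<and> (\<forall>k\<in>set t. rlen k \<le> train_len t)"
  using assms by (induction t) (auto simp: train_len_def)

lemma train_sign_pm: "\<forall>k\<in>set t. rsign k = 1 \<or> rsign k = -1 \<Longrightarrow> train_sign t = 1 \<or> train_sign t = -1"
  by (induction t) (auto simp: train_sign_def)

lemma train_len_pos: "\<forall>k\<in>set t. rlen k > 0 \<Longrightarrow> t \<noteq> [] \<Longrightarrow> train_len t > 0"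
  by (cases t) (auto simp: train_len_def)

lemma finite_trains: assumes "rodset R" shows "finite {t\<in>lists R. train_len t = n}"
proof -
  let ?F = "{k\<in>R. rlen k \<le> n}"
  have "?F = (\<Union>m\<in>{..n}. {k\<in>R. rlen k = m})" by auto
  hence fF: "finite ?F" using assms by (auto simp: rodset_def)
  have "{t\<in>lists R. train_len t = n} \<subseteq> {xs. set xs \<subseteq> ?F \<and> length xs \<le> n}"
  proof
    fix t assume t: "t \<in> {t\<in>lists R. train_len t = n}"
    hence "\<forall>k\<in>set t. rlen k > 0" using assms by (auto simp: rodset_def)
    from train_aux[OF this] t show "t \<in> {xs. set xs \<subseteq> ?F \<and> length xs \<le> n}" by auto
  qed
  thus ?thesis using finite_lists_length_le[OF fF] finite_subset by blast
qed

lemma trains_rods_eq: "trains_rods X = (\<lambda>t. (train_len t, t, train_sign t)) ` (X - {[]})"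
  unfolding trains_rods_def by auto

definition fs :: "'c rod list set \<Rightarrow> nat \<Rightarrow> int" where
  "fs X n = (\<Sum>t\<in>{t\<in>X. train_len t = n}. train_sign t)"

lemma trains_props: assumes "rodset R" "X \<subseteq> lists R"
  shows "rodset (trains_rods X)" "W n (trains_rods X) = fs (X - {[]}) n"
proof -
  let ?f = "(\<lambda>t. (train_len t, t, train_sign t))"
  have i: "inj_on ?f (X - {[]})" by (rule inj_onI) auto
  show "rodset (trains_rods X)" unfolding trains_rods_eq
  proof (rule rodset_image)
    fix n show "finite {k \<in> X - {[]}. rlen (?f k) = n}"
      using assms by (intro finite_subset[OF _ finite_trains[OF assms(1), of n]]) auto
  next
    fix k assume k: "k \<in> X - {[]}"
    hence "\<forall>r\<in>set k. rlen r > 0" "\<forall>r\<in>set k. rsign r = 1 \<or> rsign r = -1"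
      using assms by (auto simp: rodset_def)
    thus "0 < rlen (?f k) \<and> (rsign (?f k) = 1 \<or> rsign (?f k) = -1)"
      using train_len_pos[of k] train_sign_pm[of k] k by simp
  qed
  show "W n (trains_rods X) = fs (X - {[]}) n"
    unfolding trains_rods_eq W_image[OF i] by (simp add: fs_def)
qed

lemma fs_Un: assumes "finite {t\<in>A. train_len t = n}" "finite {t\<in>B. train_len t = n}" "A \<inter> B = {}"
  shows "fs (A \<union> B) n = fs A n + fs B n"
proof -
  have "{t\<in>A\<union>B. train_len t = n} = {t\<in>A. train_len t = n} \<union> {t\<in>B. train_len t = n}" by auto
  thus ?thesis unfolding fs_def using assms by (simp add: sum.union_disjoint disjoint_iff)
qed

lemma fs_image: assumes "inj_on f A"
  shows "fs (f ` A) n = (\<Sum>x\<in>{x\<in>A. train_len (f x) = n}. train_sign (f x))"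
proof -
  have "{t\<in>f`A. train_len t = n} = f ` {x\<in>A. train_len (f x) = n}" by auto
  thus ?thesis unfolding fs_def by (simp add: sum.reindex inj_on_subset[OF assms])
qed

lemma partb:
  fixes R :: "'c rod set" and Q :: "'q rod set" and R' :: "'d rod set"
  assumes R: "rodset R" and Q: "rodset Q" and R': "rodset R'" and eqR: "R' \<equiv>\<^sub>r R"
    and T: "expansion_subtree R' T" and eqQ: "trains_rods (Inner R' T) \<equiv>\<^sub>r Q"
  shows "trains_rods (Leaves R' T) \<equiv>\<^sub>r runion R (runion (rbar Q) (rconcat Q R))"
proof -
  let ?I = "Inner R' T" and ?L = "Leaves R' T"
  have TR: "T \<subseteq> lists R'" and root: "[] \<in> T" and par: "\<And>t k. t @ [k] \<in> T \<Longrightarrow> t \<in> T"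
    and ch: "\<And>k. k \<in> R' \<Longrightarrow> [k] \<in> T"
    and sib: "\<And>t k k'. t @ [k] \<in> T \<Longrightarrow> k' \<in> R' \<Longrightarrow> t @ [k'] \<in> T"
    using T unfolding expansion_subtree_def by blast+
  have IT: "?I \<subseteq> T" and LT: "?L \<subseteq> T" unfolding Inner_def Leaves_def by auto
  have I0: "[] \<notin> ?I" unfolding Inner_def by auto
  have finT: "\<And>X m. X \<subseteq> T \<Longrightarrow> finite {t\<in>X. train_len t = m}"
    using TR by (intro finite_subset[OF _ finite_trains[OF R']]) auto
  have rI: "rodset (trains_rods ?I)" using trains_props(1)[OF R'] IT TR by blast
  have rL: "rodset (trains_rods ?L)" using trains_props(1)[OF R'] LT TR by blast
  have WI: "\<And>m. W m (trains_rods ?I) = fs ?I m" using trains_props(2)[OF R'] IT TR I0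
    by (metis Diff_empty Diff_insert0 order_trans)
  have WL: "\<And>m. W m (trains_rods ?L) = fs (?L - {[]}) m" using trains_props(2)[OF R'] LT TR
    by (meson order_trans)
  have rC: "rodset (rconcat Q R)" using rconcat_props[OF Q R] by blast
  have rB: "rodset (rbar Q)" using rbar_props[OF Q] by blast
  have rU1: "rodset (runion (rbar Q) (rconcat Q R))" using runion_props(1)[OF rB rC] .
  have rU: "rodset (runion R (runion (rbar Q) (rconcat Q R)))" using runion_props(1)[OF R rU1] .
  have d1: "T - {[]} = (?L - {[]}) \<union> ?I" unfolding Inner_def Leaves_def by auto
  have d1': "(?L - {[]}) \<inter> ?I = {}" unfolding Inner_def Leaves_def by auto
  have d2: "T - {[]} = (\<lambda>k. [k]) ` R' \<union> (\<lambda>p. fst p @ [snd p]) ` (?I \<times> R')"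
  proof
    show "T - {[]} \<subseteq> (\<lambda>k. [k]) ` R' \<union> (\<lambda>p. fst p @ [snd p]) ` (?I \<times> R')"
    proof
      fix t assume t: "t \<in> T - {[]}"
      then obtain s k where sk: "t = s @ [k]" by (metis DiffD2 insertI1 rev_exhaust)
      have sT: "s \<in> T" using par t sk by blast
      have kR: "k \<in> R'" using t sk TR by auto
      show "t \<in> (\<lambda>k. [k]) ` R' \<union> (\<lambda>p. fst p @ [snd p]) ` (?I \<times> R')"
      proof (cases "s = []")
        case True thus ?thesis using sk kR by auto
      next
        case False
        hence "s \<in> ?I" unfolding Inner_def using sT kR t sk by auto
        thus ?thesis using sk kR by (auto intro!: image_eqI[where x="(s,k)"])
      qed
    qed
  next
    show "(\<lambda>k. [k]) ` R' \<union> (\<lambda>p. fst p @ [snd p]) ` (?I \<times> R') \<subseteq> T - {[]}"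
      using ch sib unfolding Inner_def by auto
  qed
  have d2': "(\<lambda>k. [k]) ` R' \<inter> (\<lambda>p. fst p @ [snd p]) ` (?I \<times> R') = {}"
    using I0 by (auto simp: append_eq_Cons_conv)
  have inj1: "inj_on (\<lambda>k. [k]) R'" by (rule inj_onI) auto
  have inj2: "inj_on (\<lambda>p. fst p @ [snd p]) (?I \<times> R')" by (rule inj_onI) (auto simp: prod_eq_iff)
  have finI: "\<And>a. finite {x\<in>?I. train_len x = a}" using finT IT by blast
  have finR: "\<And>a. finite {x\<in>R'. rlen x = a}" using R' by (auto simp: rodset_def)
  show ?thesis unfolding rod_equiv_def
  proof (intro allI impI)
    fix n :: nat assume n: "n > 0"
    have A: "fs (T - {[]}) n = fs (?L - {[]}) n + fs ?I n"
      unfolding d1 by (rule fs_Un[OF _ _ d1']) (use finT[of "?L - {[]}" n] finT[of ?I n] LT IT in auto)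
    have B: "fs (T - {[]}) n = fs ((\<lambda>k. [k]) ` R') n + fs ((\<lambda>p. fst p @ [snd p]) ` (?I \<times> R')) n"
      unfolding d2 by (rule fs_Un[OF _ _ d2'], (rule finT, use d2 in blast)+)
    have B1: "fs ((\<lambda>k. [k]) ` R') n = W n R'"
      unfolding fs_image[OF inj1] W_def by simp
    have B2: "fs ((\<lambda>p. fst p @ [snd p]) ` (?I \<times> R')) n = (\<Sum>a\<in>{..n}. fs ?I a * W (n - a) R')"
      unfolding fs_image[OF inj2] unfolding W_def fs_def
      using conv[OF finI finR, where n=n and f=train_sign and g=rsign] by simp
    have trm: "fs ?I a * W (n - a) R' = W a Q * W (n - a) R" if "a \<in> {..n}" for a
    proof -
      have "fs ?I a = W a Q" using W_equiv[OF rI Q eqQ] WI by simp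
      moreover have "W (n - a) R' = W (n - a) R" using W_equiv[OF R' R eqR] .
      ultimately show ?thesis by simp
    qed
    have C: "W n (rconcat Q R) = (\<Sum>a\<in>{..n}. fs ?I a * W (n - a) R')"
      unfolding rconcat_props(2)[OF Q R] by (rule sum.cong[OF refl]) (simp add: trm)
    have "Ccount n (trains_rods ?L) = fs (?L - {[]}) n" using Ccount_W[OF rL] WL by simp
    also have "\<dots> = W n R' + W n (rconcat Q R) - fs ?I n" using A B B1 B2 C by simp
    also have "\<dots> = W n R + W n (rbar Q) + W n (rconcat Q R)"
      using W_equiv[OF R' R eqR] W_equiv[OF rI Q eqQ] WI rbar_props(2)[OF Q] by simp
    also have "\<dots> = Ccount n (runion R (runion (rbar Q) (rconcat Q R)))"
      using Ccount_W[OF rU] runion_props(2)[OF R rU1] runion_props(2)[OF rB rC] by simp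
    finally show "Ccount n (trains_rods ?L) = Ccount n (runion R (runion (rbar Q) (rconcat Q R)))" .
  qed
qed



definition sg :: "int \<Rightarrow> int" where "sg z = (if z \<ge> 0 then 1 else -1)"

definition Pset :: "(nat \<Rightarrow> int) \<Rightarrow> (nat \<times> nat) set" where
  "Pset c = {(m,i). m > 0 \<and> i < nat \<bar>c m\<bar>}"

lemma Pset_fiber: "n > 0 \<Longrightarrow> {p\<in>Pset c. fst p = n} = (\<lambda>i. (n,i)) ` {..<nat \<bar>c n\<bar>}"
  unfolding Pset_def by auto

lemma Pset_fiber0: "{p\<in>Pset c. fst p = 0} = {}"
  unfolding Pset_def by auto

lemma finite_Pset_fiber: "finite {p\<in>Pset c. fst p = n}"
  by (cases "n = 0") (simp_all add: Pset_fiber Pset_fiber0)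

lemma sum_Pset: "n > 0 \<Longrightarrow> (\<Sum>p\<in>{p\<in>Pset c. fst p = n}. s) = int (nat \<bar>c n\<bar>) * s"
  by (simp add: Pset_fiber card_image inj_on_def)

lemma sg_pm: "sg z = 1 \<or> sg z = -1" by (simp add: sg_def)

lemma sg_mult: "int (nat \<bar>z\<bar>) * sg z = z" by (simp add: sg_def)
lemma sg_mult2: "\<bar>z\<bar> * sg z = z" by (simp add: sg_def)

lemma W_Pset:
  assumes "\<And>p. rlen (f p) = fst p" "\<And>p. rsign (f p) = s (fst p)" "inj_on f (Pset c)" "n > 0"
  shows "W n (f ` Pset c) = int (nat \<bar>c n\<bar>) * s n"
proof -
  have "W n (f ` Pset c) = (\<Sum>p\<in>{p\<in>Pset c. fst p = n}. s n)"
    unfolding W_image[OF assms(3)] assms(1,2) by (rule sum.cong) auto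
  thus ?thesis using sum_Pset[OF assms(4)] by simp
qed

lemma rodset_Pset:
  assumes "\<And>p. rlen (f p) = fst p" "\<And>p. rsign (f p) = 1 \<or> rsign (f p) = -1"
  shows "rodset (f ` Pset c)"
  by (rule rodset_image) (auto simp: assms finite_Pset_fiber, auto simp: Pset_def)

lemma parta:
  fixes R :: "'c rod set" and Q :: "'q rod set"
  assumes R: "rodset R" and Q: "rodset Q"
  shows "\<exists>R' :: nat rod set. rodset R' \<and> R' \<equiv>\<^sub>r R \<and>
            (\<exists>T. expansion_subtree R' T \<and> trains_rods (Inner R' T) \<equiv>\<^sub>r Q)"
proof -
  define cR where "cR n = Ccount n R" for n
  define cQ where "cQ n = Ccount n Q" for n
  define h1 :: "nat \<times> nat \<Rightarrow> nat rod" where "h1 p = (fst p, 2 * snd p, sg (cR (fst p)))" for p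
  define hp :: "nat \<times> nat \<Rightarrow> nat rod" where "hp p = (fst p, 2 * snd p + 1, 1)" for p
  define hm :: "nat \<times> nat \<Rightarrow> nat rod" where "hm p = (fst p, 2 * snd p + 1, -1)" for p
  define g :: "nat \<times> nat \<Rightarrow> nat rod list" where "g p = [(fst p, 2 * snd p + 1, sg (cQ (fst p)))]" for p
  define R' where "R' = h1 ` Pset cR \<union> hp ` Pset cQ \<union> hm ` Pset cQ"
  define Inn where "Inn = g ` Pset cQ"
  define T where "T = {[]} \<union> (\<lambda>k. [k]) ` R' \<union> (\<lambda>p. fst p @ [snd p]) ` (Inn \<times> R')"
  have i1: "inj_on h1 X" and ip: "inj_on hp X" and im: "inj_on hm X" for X
    by (auto simp: inj_on_def h1_def hp_def hm_def prod_eq_iff)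
  have r1: "rodset (h1 ` Pset cR)" by (rule rodset_Pset) (auto simp: h1_def sg_pm)
  have rp: "rodset (hp ` Pset cQ)" by (rule rodset_Pset) (auto simp: hp_def)
  have rm: "rodset (hm ` Pset cQ)" by (rule rodset_Pset) (auto simp: hm_def)
  have rR': "rodset R'" unfolding R'_def by (intro rodset_Un r1 rp rm)
  have dis1: "h1 ` Pset cR \<inter> (hp ` Pset cQ \<union> hm ` Pset cQ) = {}"
    by (auto simp: h1_def hp_def hm_def) presburger+
  have dis2: "hp ` Pset cQ \<inter> hm ` Pset cQ = {}" by (auto simp: hp_def hm_def)
  have eqR: "R' \<equiv>\<^sub>r R" unfolding rod_equiv_def
  proof (intro allI impI)
    fix n :: nat assume n: "n > 0"
    have "W n R' = W n (h1 ` Pset cR) + (W n (hp ` Pset cQ) + W n (hm ` Pset cQ))"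
      unfolding R'_def Un_assoc
      by (simp add: W_Un rodset_Un r1 rp rm dis1 dis2)
    also have "\<dots> = int (nat \<bar>cR n\<bar>) * sg (cR n) + (int (nat \<bar>cQ n\<bar>) * 1 + int (nat \<bar>cQ n\<bar>) * (-1))"
      using W_Pset[of h1 "\<lambda>m. sg (cR m)", OF _ _ i1 n]
        W_Pset[of hp "\<lambda>m. 1", OF _ _ ip n] W_Pset[of hm "\<lambda>m. -1", OF _ _ im n]
      by (simp add: h1_def hp_def hm_def)
    also have "\<dots> = cR n" by (simp add: sg_mult sg_mult2)
    finally show "Ccount n R' = Ccount n R" using Ccount_W[OF rR'] cR_def by simp
  qed
  have InnR: "\<And>t. t \<in> Inn \<Longrightarrow> \<exists>x\<in>R'. t = [x]"
  proof -
    fix t assume "t \<in> Inn"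
    then obtain p where p: "p \<in> Pset cQ" "t = g p" unfolding Inn_def by auto
    have "(fst p, 2 * snd p + 1, sg (cQ (fst p))) \<in> R'"
      using p(1) sg_pm[of "cQ (fst p)"] unfolding R'_def hp_def hm_def by auto
    thus "\<exists>x\<in>R'. t = [x]" using p(2) g_def by auto
  qed
  have ex: "expansion_subtree R' T"
    unfolding expansion_subtree_def
  proof (intro conjI allI impI ballI)
    show "T \<subseteq> lists R'" unfolding T_def using InnR by fastforce
    show "[] \<in> T" unfolding T_def by auto
    show "k \<in> R' \<Longrightarrow> [k] \<in> T" for k unfolding T_def by auto
    have c: "t = [] \<or> t \<in> Inn" if "t @ [k] \<in> T" for t k
      using that unfolding T_def by (auto simp: append_eq_Cons_conv)
    show "t \<in> T" if "t @ [k] \<in> T" for t k using c[OF that] InnR unfolding T_def by auto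
    show "t @ [k'] \<in> T" if "t @ [k] \<in> T \<and> k' \<in> R'" for t k k'
      using c[of t k] that unfolding T_def by (auto intro!: image_eqI[where x="(t,k')"])
  qed
  have Inner: "Inner R' T = Inn"
  proof
    show "Inner R' T \<subseteq> Inn" unfolding Inner_def T_def by (auto simp: append_eq_Cons_conv)
    show "Inn \<subseteq> Inner R' T"
    proof
      fix t assume t: "t \<in> Inn"
      then obtain x where x: "x \<in> R'" "t = [x]" using InnR by blast
      have "t @ [x] \<in> T" unfolding T_def using t x(1) by (auto intro!: image_eqI[where x="(t,x)"])
      moreover have "t \<in> T" unfolding T_def using x by auto
      ultimately show "t \<in> Inner R' T" unfolding Inner_def using x by auto
    qed
  qed
  have InnL: "Inn \<subseteq> lists R'" using InnR by fastforce
  have ig: "inj_on g X" for X by (auto simp: inj_on_def g_def prod_eq_iff)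
  have eqQ: "trains_rods (Inner R' T) \<equiv>\<^sub>r Q" unfolding rod_equiv_def Inner
  proof (intro allI impI)
    fix n :: nat assume n: "n > 0"
    have "[] \<notin> Inn" unfolding Inn_def g_def by auto
    hence "W n (trains_rods Inn) = fs Inn n" using trains_props(2)[OF rR' InnL] by simp
    also have "\<dots> = (\<Sum>p\<in>{p\<in>Pset cQ. fst p = n}. sg (cQ n))"
      unfolding Inn_def fs_image[OF ig] by (rule sum.cong) (auto simp: g_def)
    also have "\<dots> = cQ n" by (simp only: sum_Pset[OF n] sg_mult)
    finally show "Ccount n (trains_rods Inn) = Ccount n Q"
      using Ccount_W[OF trains_props(1)[OF rR' InnL]] cQ_def by simp
  qed
  show ?thesis using rR' eqR ex eqQ by blast
qed


theorem mainTheorem5: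
  fixes R :: "'c rod set" and Q :: "'q rod set"
  assumes "rodset R" and "rodset Q"
  shows "(\<exists>R' :: nat rod set. rodset R' \<and> R' \<equiv>\<^sub>r R \<and>
            (\<exists>T. expansion_subtree R' T \<and> trains_rods (Inner R' T) \<equiv>\<^sub>r Q))
       \<and> (\<forall>(R' :: 'd rod set) T. rodset R' \<and> R' \<equiv>\<^sub>r R \<and> expansion_subtree R' T
            \<and> trains_rods (Inner R' T) \<equiv>\<^sub>r Q
            \<longrightarrow> trains_rods (Leaves R' T) \<equiv>\<^sub>r runion R (runion (rbar Q) (rconcat Q R)))"
  using parta[OF assms] partb[OF assms] by blast

end
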